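(* Let $a$ and $b$ be two distinct complex numbers and let $f$ be a holomorphic function on $\mathbb{C}^n$. Suppose that the function $$P(f)(z)=\prod_{i=1}^{n}\left(\frac{\partial f(z)}{\partial z_i}-a\right)\left(\frac{\partial f(z)}{\partial z_i}-b\right)\left(\frac{\partial f(z)}{\partial z_i}-f(z)\right)$$ omits the value $0$ on $\mathbb{C}^n$, i.e. $P(f)(z)\neq 0$ for all $z\in\mathbb{C}^n$. Then $f$ is constant.
   Context: $z=(z_1,\dots,z_n)$ denotes a point of $\mathbb{C}^n$ and $\partial f/\partial z_i$ the complex partial derivatives of $f$. *)

theory Defs
  imports "HOL-Analysis.Analysis"
begin

text \<open>Points of C^n are vectors of type complex^'n (n = CARD('n)).\<close>

definition holomorphic_Cn :: "(complex^'n \<Rightarrow> complex) \<Rightarrow> bool" where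
  "holomorphic_Cn f \<longleftrightarrow>
     (\<forall>z. \<exists>c::complex^'n. (f has_derivative (\<lambda>h. \<Sum>i\<in>UNIV. c $ i * h $ i)) (at z))"

definition cpartial :: "(complex^'n \<Rightarrow> complex) \<Rightarrow> 'n \<Rightarrow> complex^'n \<Rightarrow> complex" where
  "cpartial f i z = deriv (\<lambda>t. f (z + axis i t)) 0"

end

theory Submission
  imports Defs "HOL-Complex_Analysis.Complex_Analysis"
begin

lemma l_axis: "linear (axis i :: complex \<Rightarrow> complex^'n)"
  apply (rule linearI)
  apply (simp_all add: vec_eq_iff axis_def)
  done

lemma bl_axis: "bounded_linear (axis i :: complex \<Rightarrow> complex^'n)"
  using l_axis[of i] linear_conv_bounded_linear by blast

lemma inner_deriv: "((\<lambda>s. w + axis i s) has_derivative axis i) (at (t0::complex))" for w :: "complex^'n"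
proof -
  have "((\<lambda>s. axis i s + w) has_derivative axis i) (at t0)"
    by (rule has_derivative_add_const[OF bounded_linear_imp_has_derivative[OF bl_axis]])
  thus ?thesis by (simp only: add.commute)
qed

lemma axis_zero[simp]: "axis i (0::complex) = (0::complex^'n)"
  by (simp add: vec_eq_iff axis_def)

lemma line_deriv:
  fixes f :: "complex^'n \<Rightarrow> complex"
  assumes "holomorphic_Cn f"
  shows "((\<lambda>s. f (z + axis i s)) has_field_derivative cpartial f i (z + axis i t)) (at t)"
proof -
  have gen: "((\<lambda>s. f (w + axis i s)) has_field_derivative c $ i) (at t0)"
    if "(f has_derivative (\<lambda>h. \<Sum>j\<in>UNIV. c $ j * h $ j)) (at (w + axis i t0))" for w t0 c
  proof -
    have inner: "((\<lambda>s. w + axis i s) has_derivative axis i) (at t0)"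
      by (rule inner_deriv)
    have "((\<lambda>s. f (w + axis i s)) has_derivative ((\<lambda>h. \<Sum>j\<in>UNIV. c $ j * h $ j) \<circ> axis i)) (at t0)"
      using diff_chain_at[OF inner that] by (simp add: o_def)
    moreover have "((\<lambda>h. \<Sum>j\<in>UNIV. c $ j * h $ j) \<circ> axis i) = (*) (c $ i)"
      by (auto simp: fun_eq_iff axis_def if_distrib cong: if_cong)
    ultimately show ?thesis by (simp add: has_field_derivative_def mult.commute)
  qed
  obtain c where c: "(f has_derivative (\<lambda>h. \<Sum>j\<in>UNIV. c $ j * h $ j)) (at (z + axis i t))"
    using assms unfolding holomorphic_Cn_def by blast
  have "cpartial f i (z + axis i t) = c $ i"
    unfolding cpartial_def
    by (rule DERIV_imp_deriv, rule gen) (simp add: c)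
  with gen[OF c] show ?thesis by simp
qed

theorem proposition2:
  fixes f :: "complex^'n \<Rightarrow> complex" and a b :: complex
  assumes "a \<noteq> b"
    and "holomorphic_Cn f"
    and "\<forall>z. (\<Prod>i\<in>UNIV. (cpartial f i z - a) * (cpartial f i z - b) * (cpartial f i z - f z)) \<noteq> 0"
  shows "\<exists>c. \<forall>z. f z = c"
proof -
  have nz: "cpartial f i z \<noteq> a \<and> cpartial f i z \<noteq> b \<and> cpartial f i z \<noteq> f z" for i z
    using assms(3) by (auto simp: prod_zero_iff)
  have line: "f (z + axis i t) = f z" for z i t
  proof -
    define \<phi> where "\<phi> = (\<lambda>s. f (z + axis i s))"
    have D: "(\<phi> has_field_derivative cpartial f i (z + axis i s)) (at s)" for s
      unfolding \<phi>_def by (rule line_deriv[OF assms(2)])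
    hence dphi: "deriv \<phi> s = cpartial f i (z + axis i s)" for s
      by (rule DERIV_imp_deriv)
    have hol: "\<phi> holomorphic_on UNIV"
      using D by (auto simp: holomorphic_on_def field_differentiable_def)
    have "deriv \<phi> holomorphic_on UNIV"
      by (rule holomorphic_deriv[OF hol]) simp
    moreover have "range (deriv \<phi>) \<inter> {a, b} = {}"
      using nz by (auto simp: dphi)
    ultimately obtain k where k: "deriv \<phi> = (\<lambda>x. k)"
      using little_Picard[OF _ assms(1)] by blast
    have "((\<lambda>s. \<phi> s - k * s) has_field_derivative 0) (at s within UNIV)" for s
      using D[of s] k dphi[of s] by (auto intro!: derivative_eq_intros)
    then obtain d where d: "\<forall>s\<in>UNIV. \<phi> s - k * s = d"
      using has_field_derivative_zero_constant[of UNIV "\<lambda>s. \<phi> s - k * s"] by auto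
    have "k = 0"
    proof (rule ccontr)
      assume "k \<noteq> 0"
      define s where "s = (k - d) / k"
      have "\<phi> s = k" using d \<open>k \<noteq> 0\<close> 
      proof -
        have e: "\<phi> s - k * s = d" using d by simp
        have "k * s = k - d" using \<open>k \<noteq> 0\<close> by (simp add: s_def)
        with e show ?thesis by (simp add: algebra_simps)
      qed
      moreover have "deriv \<phi> s = k" using k by simp
      ultimately show False using nz[of i "z + axis i s"] dphi[of s] unfolding \<phi>_def by simp
    qed
    have ax0: "axis i (0::complex) = (0::complex^'n)" by (simp add: vec_eq_iff axis_def)
    have "\<phi> t = \<phi> 0" using d \<open>k = 0\<close> by (metis UNIV_I diff_zero mult_zero_left)
    thus ?thesis unfolding \<phi>_def using ax0 by simp
  qed
  have ind: "f (\<Sum>i\<in>S. axis i (z $ i)) = f 0" if "finite S" for S z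
    using that
  proof (induction S rule: finite_induct)
    case empty then show ?case by simp
  next
    case (insert j S)
    then show ?case using line[of "\<Sum>i\<in>S. axis i (z $ i)" j "z $ j"]
      by (simp add: add.commute)
  qed
  have "(\<Sum>i\<in>UNIV. axis i (z $ i)) = z" for z :: "complex^'n"
    by (simp add: vec_eq_iff sum_component axis_def)
  then have "f z = f 0" for z using ind[of UNIV z] by simp
  thus ?thesis by blast
qed

end
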